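(* Let $(\mathfrak J=\mathcal U\oplus\mathcal V,B)$ be a Jordan-Manin algebra with $\mathfrak J\neq\{0\}$. If $\mathfrak J$ is nilpotent, then $\mathcal U\cap\mathrm{Ann}(\mathfrak J)\neq\{0\}$ and $\mathcal V\cap\mathrm{Ann}(\mathfrak J)\neq\{0\}$.
   Context: All algebras are finite-dimensional over a field of characteristic zero. A Jordan algebra is a commutative algebra with $x(yx^2)=(xy)x^2$; $(\mathfrak J,B)$ is pseudo-euclidean if $B$ is nondegenerate symmetric with $B(xy,z)=B(x,yz)$. A Jordan-Manin algebra is a pseudo-euclidean Jordan algebra $(\mathfrak J,B)$ with $\mathfrak J=\mathcal U\oplus\mathcal V$ (vector space direct sum) for two subalgebras $\mathcal U,\mathcal V$ totally isotropic for $B$. $\mathrm{Ann}(\mathfrak J)=\{x:x\mathfrak J=0\}$. *)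

theory Defs
  imports Complex_Main
begin

text \<open>A finite-dimensional algebra over a field 'k (characteristic zero is imposed by the
  type class of 'k in the theorem), whose underlying vector space is the whole type 'v,
  with scalar multiplication scale and bilinear product mult.\<close>

definition fd_algebra ::
  "('k::field \<Rightarrow> 'v::ab_group_add \<Rightarrow> 'v) \<Rightarrow> ('v \<Rightarrow> 'v \<Rightarrow> 'v) \<Rightarrow> bool" where
  "fd_algebra scale mult \<longleftrightarrow>
     vector_space scale \<and>
     (\<exists>basis. finite_dimensional_vector_space scale basis) \<and>
     (\<forall>x y z. mult (x + y) z = mult x z + mult y z) \<and>
     (\<forall>x y z. mult x (y + z) = mult x y + mult x z) \<and>
     (\<forall>c x y. mult (scale c x) y = scale c (mult x y)) \<and>
     (\<forall>c x y. mult x (scale c y) = scale c (mult x y))"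

definition jordan_algebra ::
  "('k::field \<Rightarrow> 'v::ab_group_add \<Rightarrow> 'v) \<Rightarrow> ('v \<Rightarrow> 'v \<Rightarrow> 'v) \<Rightarrow> bool" where
  "jordan_algebra scale mult \<longleftrightarrow>
     fd_algebra scale mult \<and>
     (\<forall>x y. mult x y = mult y x) \<and>
     (\<forall>x y. mult x (mult y (mult x x)) = mult (mult x y) (mult x x))"

definition pseudo_euclidean ::
  "('k::field \<Rightarrow> 'v::ab_group_add \<Rightarrow> 'v) \<Rightarrow> ('v \<Rightarrow> 'v \<Rightarrow> 'v) \<Rightarrow> ('v \<Rightarrow> 'v \<Rightarrow> 'k) \<Rightarrow> bool" where
  "pseudo_euclidean scale mult B \<longleftrightarrow>
     jordan_algebra scale mult \<and>
     (\<forall>x y z. B (x + y) z = B x z + B y z) \<and>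
     (\<forall>c x y. B (scale c x) y = c * B x y) \<and>
     (\<forall>x y. B x y = B y x) \<and>
     (\<forall>x. (\<forall>y. B x y = 0) \<longrightarrow> x = 0) \<and>
     (\<forall>x y z. B (mult x y) z = B x (mult y z))"

definition subalgebra ::
  "('k::field \<Rightarrow> 'v::ab_group_add \<Rightarrow> 'v) \<Rightarrow> ('v \<Rightarrow> 'v \<Rightarrow> 'v) \<Rightarrow> 'v set \<Rightarrow> bool" where
  "subalgebra scale mult U \<longleftrightarrow>
     module.subspace scale U \<and> (\<forall>x\<in>U. \<forall>y\<in>U. mult x y \<in> U)"

definition totally_isotropic :: "('v \<Rightarrow> 'v \<Rightarrow> 'k::zero) \<Rightarrow> 'v set \<Rightarrow> bool" where
  "totally_isotropic B U \<longleftrightarrow> (\<forall>x\<in>U. \<forall>y\<in>U. B x y = 0)"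

definition direct_sum_decomp :: "'v::ab_group_add set \<Rightarrow> 'v set \<Rightarrow> bool" where
  "direct_sum_decomp U V \<longleftrightarrow> U \<inter> V = {0} \<and> (\<forall>x. \<exists>u\<in>U. \<exists>v\<in>V. x = u + v)"

definition jordan_manin ::
  "('k::field \<Rightarrow> 'v::ab_group_add \<Rightarrow> 'v) \<Rightarrow> ('v \<Rightarrow> 'v \<Rightarrow> 'v) \<Rightarrow> ('v \<Rightarrow> 'v \<Rightarrow> 'k)
     \<Rightarrow> 'v set \<Rightarrow> 'v set \<Rightarrow> bool" where
  "jordan_manin scale mult B U V \<longleftrightarrow>
     pseudo_euclidean scale mult B \<and>
     subalgebra scale mult U \<and> subalgebra scale mult V \<and>
     totally_isotropic B U \<and> totally_isotropic B V \<and>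
     direct_sum_decomp U V"

text \<open>Products of n elements of the algebra, in any bracketing (the spanning set of J^n).\<close>
inductive product_of_degree :: "('v \<Rightarrow> 'v \<Rightarrow> 'v) \<Rightarrow> nat \<Rightarrow> 'v \<Rightarrow> bool"
  for mult where
  single: "product_of_degree mult 1 x"
| prod: "product_of_degree mult i x \<Longrightarrow> product_of_degree mult j y \<Longrightarrow>
         product_of_degree mult (i + j) (mult x y)"

text \<open>Nilpotent: J^n = 0 for some n, i.e. every product of n elements (any bracketing) vanishes.\<close>
definition nilpotent_alg :: "('v::zero \<Rightarrow> 'v \<Rightarrow> 'v) \<Rightarrow> bool" where
  "nilpotent_alg mult \<longleftrightarrow> (\<exists>n\<ge>1. \<forall>x. product_of_degree mult n x \<longrightarrow> x = 0)"

definition Ann :: "('v::zero \<Rightarrow> 'v \<Rightarrow> 'v) \<Rightarrow> 'v set" where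
  "Ann mult = {x. \<forall>y. mult x y = 0}"

end

theory Submission
  imports Defs
begin

context finite_dimensional_vector_space
begin

lemma perp_exists:
  fixes f :: "'b \<Rightarrow> 'b \<Rightarrow> 'a"
  assumes add: "\<And>x y z. f (x+y) z = f x z + f y z"
    and sc: "\<And>c x y. f (c *s x) y = c * f x y"
    and F: "finite F"
  shows "subspace S \<Longrightarrow> card F < dim S \<Longrightarrow> \<exists>x\<in>S. x \<noteq> 0 \<and> (\<forall>b\<in>F. f x b = 0)"
  using F
proof (induction F arbitrary: S rule: finite_induct)
  case empty
  then have "dim S \<noteq> 0" by (simp del: dim_eq_0)
  have "\<not> S \<subseteq> {0}"
  proof
    assume "S \<subseteq> {0}"
    then have "dim S = 0" by simp
    with \<open>dim S \<noteq> 0\<close> show False by simp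
  qed
  then show ?case by auto
next
  case (insert b F)
  have f0: "f 0 z = 0" for z using add[of 0 0 z] by (metis add.right_neutral add_left_cancel)
  have fdiff: "f (x - y) z = f x z - f y z" for x y z
    using add[of "x - y" y z] by (simp add: algebra_simps)
  define K where "K = {x\<in>S. f x b = 0}"
  have subK: "subspace K"
    using insert.prems(1) unfolding K_def subspace_def by (auto simp: f0 add sc)
  have dimK: "card F < dim K"
  proof (cases "\<forall>x\<in>S. f x b = 0")
    case True
    then have "K = S" unfolding K_def by auto
    then show ?thesis using insert by auto
  next
    case False
    then obtain s0 where s0: "s0 \<in> S" "f s0 b \<noteq> 0" by auto
    have "S \<subseteq> span (insert s0 K)"
    proof
      fix x assume x: "x \<in> S"
      define c where "c = f x b / f s0 b"
      have "x - c *s s0 \<in> K" unfolding K_def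
        using x s0 insert.prems(1) by (auto simp: fdiff sc c_def subspace_diff subspace_scale)
      then have "x - c *s s0 \<in> span (insert s0 K)" by (auto intro: span_base)
      moreover have "c *s s0 \<in> span (insert s0 K)" by (auto intro: span_base span_scale)
      ultimately have "(x - c *s s0) + c *s s0 \<in> span (insert s0 K)" by (rule span_add)
      then show "x \<in> span (insert s0 K)" by simp
    qed
    then have "dim S \<le> dim (insert s0 K)" by (rule dim_mono)
    also have "\<dots> \<le> dim K + 1" by (simp add: dim_insert)
    finally show ?thesis using insert by auto
  qed
  obtain x where "x \<in> K" "x \<noteq> 0" "\<forall>b\<in>F. f x b = 0" using insert.IH[OF subK dimK] by auto
  then show ?case unfolding K_def by auto
qed

end

lemma deg_pos: "product_of_degree mult n x \<Longrightarrow> n \<ge> 1"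
  by (induction rule: product_of_degree.induct) auto

lemma deg_mono: "product_of_degree mult n x \<Longrightarrow> 1 \<le> m \<Longrightarrow> m \<le> n \<Longrightarrow> product_of_degree mult m x"
proof (induction arbitrary: m rule: product_of_degree.induct)
  case (single x)
  then show ?case using product_of_degree.single[of mult x] by simp
next
  case (prod i x j y)
  show ?case
  proof (cases "m = 1")
    case True then show ?thesis using product_of_degree.single[of mult "mult x y"] by simp
  next
    case False
    have i1: "i \<ge> 1" "j \<ge> 1" using prod.hyps deg_pos by auto
    define i' where "i' = min i (m - 1)"
    define j' where "j' = m - i'"
    have "product_of_degree mult i' x" using prod i1 False by (auto simp: i'_def)
    moreover have "product_of_degree mult j' y" using prod i1 False
      by (intro prod.IH(2)) (auto simp: j'_def i'_def)
    ultimately have "product_of_degree mult (i' + j') (mult x y)" by (rule product_of_degree.prod)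
    moreover have "i' + j' = m" using False prod i1 by (auto simp: i'_def j'_def)
    ultimately show ?thesis by simp
  qed
qed

lemma deg2: "product_of_degree mult 2 z \<Longrightarrow> \<exists>x y. z = mult x y"
  by (cases rule: product_of_degree.cases) (auto dest: deg_pos)

lemma one_side:
  fixes scale :: "'k::field \<Rightarrow> 'v::ab_group_add \<Rightarrow> 'v"
    and mult :: "'v \<Rightarrow> 'v \<Rightarrow> 'v"
    and B :: "'v \<Rightarrow> 'v \<Rightarrow> 'k"
    and U V :: "'v set"
  assumes jm: "jordan_manin scale mult B U V"
    and ne: "(UNIV :: 'v set) \<noteq> {0}"
    and nil: "nilpotent_alg mult"
  shows "U \<inter> Ann mult \<noteq> {0}"
proof -
  have pe: "pseudo_euclidean scale mult B" and subU: "subalgebra scale mult U"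
    and isoU: "totally_isotropic B U" and isoV: "totally_isotropic B V"
    and ds: "direct_sum_decomp U V"
    using jm unfolding jordan_manin_def by auto
  have ja: "jordan_algebra scale mult" using pe unfolding pseudo_euclidean_def by auto
  then have fa: "fd_algebra scale mult" unfolding jordan_algebra_def by auto
  then obtain basis where fdv: "finite_dimensional_vector_space scale basis"
    unfolding fd_algebra_def by auto
  interpret fd: finite_dimensional_vector_space scale basis by (rule fdv)
  have madd1: "\<And>x y z. mult (x + y) z = mult x z + mult y z"
    and madd2: "\<And>x y z. mult x (y + z) = mult x y + mult x z"
    and msc1: "\<And>c x y. mult (scale c x) y = scale c (mult x y)"
    and msc2: "\<And>c x y. mult x (scale c y) = scale c (mult x y)"
    using fa unfolding fd_algebra_def by auto
  have Badd: "\<And>x y z. B (x + y) z = B x z + B y z"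
    and Bsc: "\<And>c x y. B (scale c x) y = c * B x y"
    and Bsym: "\<And>x y. B x y = B y x"
    and Bnd: "\<And>x. (\<forall>y. B x y = 0) \<Longrightarrow> x = 0"
    and Binv: "\<And>x y z. B (mult x y) z = B x (mult y z)"
    using pe unfolding pseudo_euclidean_def by auto
  have Badd2: "B x (y + z) = B x y + B x z" for x y z
    using Badd[of y z x] Bsym[of x "y+z"] Bsym[of x y] Bsym[of x z] by simp
  have Bsc2: "B x (scale c y) = c * B x y" for x y c
    using Bsc[of c y x] Bsym[of x "scale c y"] Bsym[of x y] by simp
  have B02: "B x 0 = 0" for x using Badd2[of x 0 0] by (metis add.right_neutral add_left_cancel)
  have m01: "mult 0 y = 0" for y using madd1[of 0 0 y] by (metis add.right_neutral add_left_cancel)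
  have m02: "mult y 0 = 0" for y using madd2[of y 0 0] by (metis add.right_neutral add_left_cancel)
  have sU: "fd.subspace U" and mU: "\<And>x y. x \<in> U \<Longrightarrow> y \<in> U \<Longrightarrow> mult x y \<in> U"
    using subU unfolding subalgebra_def by auto
  have dec: "\<And>x. \<exists>u\<in>U. \<exists>v\<in>V. x = u + v" using ds unfolding direct_sum_decomp_def by auto
  define Sp where "Sp k = fd.span {x. product_of_degree mult k x}" for k
  define W where "W k = {u + s | u s. u \<in> U \<and> s \<in> Sp k}" for k
  have sW: "fd.subspace (W k)" for k
  proof -
    have "fd.subspace (Sp k)" unfolding Sp_def by simp
    then have sS: "fd.subspace (Sp k)" .
    show ?thesis
    proof (rule fd.subspaceI)
      show "0 \<in> W k" unfolding W_def using fd.subspace_0[OF sU] fd.subspace_0[OF sS] by force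
    next
      fix x y assume "x \<in> W k" "y \<in> W k"
      then obtain u s u' s' where "u \<in> U" "s \<in> Sp k" "x = u + s" "u' \<in> U" "s' \<in> Sp k" "y = u' + s'"
        unfolding W_def by blast
      then show "x + y \<in> W k" unfolding W_def
        using fd.subspace_add[OF sU] fd.subspace_add[OF sS]
        by (intro CollectI exI[of _ "u + u'"] exI[of _ "s + s'"]) (simp add: algebra_simps)
    next
      fix c x assume "x \<in> W k"
      then obtain u s where "u \<in> U" "s \<in> Sp k" "x = u + s" unfolding W_def by blast
      then show "scale c x \<in> W k" unfolding W_def
        using fd.subspace_scale[OF sU] fd.subspace_scale[OF sS]
        by (intro CollectI exI[of _ "scale c u"] exI[of _ "scale c s"]) (simp add: fd.scale_right_distrib)
    qed
  qed
  have UW: "U \<subseteq> W k" for k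
  proof
    fix u assume "u \<in> U"
    then show "u \<in> W k" unfolding W_def Sp_def
      by (intro CollectI exI[of _ u] exI[of _ 0]) (simp add: fd.span_zero)
  qed
  have SpW: "Sp k \<subseteq> W k" for k
  proof
    fix u assume "u \<in> Sp k"
    then show "u \<in> W k" unfolding W_def using fd.subspace_0[OF sU]
      by (intro CollectI exI[of _ 0] exI[of _ u]) simp
  qed
  have mult_span1: "mult x b \<in> Sp (i + j)" if "product_of_degree mult i x" "b \<in> Sp j" for x b i j
    using that(2) unfolding Sp_def
  proof (induction rule: fd.span_induct_alt)
    case base then show ?case by (simp add: m02 fd.span_zero)
  next
    case (step c y z)
    have "mult x y \<in> fd.span {x. product_of_degree mult (i + j) x}"
      using step that(1) by (auto intro!: fd.span_base product_of_degree.prod)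
    then show ?case using step by (auto simp: madd2 msc2 intro!: fd.span_add fd.span_scale)
  qed
  have mult_span: "mult a b \<in> Sp (i + j)" if "a \<in> Sp i" "b \<in> Sp j" for a b i j
    using that(1) unfolding Sp_def
  proof (induction rule: fd.span_induct_alt)
    case base then show ?case by (simp add: m01 fd.span_zero)
  next
    case (step c y z)
    have "mult y b \<in> Sp (i + j)" using step mult_span1 that(2) by auto
    then show ?case using step by (auto simp: madd1 msc1 Sp_def intro!: fd.span_add fd.span_scale)
  qed
  have Sp_mono: "Sp n \<subseteq> Sp m" if "1 \<le> m" "m \<le> n" for m n
  proof -
    have "{x. product_of_degree mult n x} \<subseteq> {x. product_of_degree mult m x}"
      using that deg_mono[of mult n _ m] by blast
    then show ?thesis unfolding Sp_def by (rule fd.span_mono)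
  qed
  have base1: "x \<in> Sp 1" for x unfolding Sp_def
    by (rule fd.span_base, rule CollectI, rule product_of_degree.single)
  have prod2: "mult x y \<in> Sp 2" for x y
  proof -
    have "product_of_degree mult (1 + 1) (mult x y)"
      by (intro product_of_degree.prod product_of_degree.single)
    then have "product_of_degree mult 2 (mult x y)" by (simp only: one_add_one)
    then show ?thesis unfolding Sp_def by (rule fd.span_base[OF CollectI])
  qed
  have W2ne: "W 2 \<noteq> UNIV"
  proof
    assume W2: "W 2 = UNIV"
    have step: "W k = UNIV \<Longrightarrow> W (Suc k) = UNIV" if "k \<ge> 1" for k
    proof -
      assume Wk: "W k = UNIV"
      have prods: "mult x y \<in> W (Suc k)" for x y
      proof -
        obtain u s where us: "u \<in> U" "s \<in> Sp k" "x = u + s" using Wk unfolding W_def by blast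
        obtain u' t where ut: "u' \<in> U" "t \<in> Sp k" "y = u' + t" using Wk unfolding W_def by blast
        have e: "mult x y = mult u u' + (mult u t + mult s u' + mult s t)"
          using us ut by (simp add: madd1 madd2 algebra_simps)
        have "mult u t \<in> Sp (Suc k)" using mult_span[OF base1 ut(2), of u] by simp
        moreover have "mult s u' \<in> Sp (Suc k)" using mult_span[OF us(2) base1, of u'] by simp
        moreover have "mult s t \<in> Sp (Suc k)"
          using mult_span[OF us(2) ut(2)] Sp_mono[of "Suc k" "k + k"] that by auto
        ultimately have "mult u t + mult s u' + mult s t \<in> Sp (Suc k)"
          unfolding Sp_def by (auto intro!: fd.span_add)
        then show ?thesis unfolding W_def e using mU us ut by blast
      qed
      have P2: "{x. product_of_degree mult 2 x} \<subseteq> W (Suc k)"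
      proof
        fix z assume "z \<in> {x. product_of_degree mult 2 x}"
        then obtain a c where "z = mult a c" using deg2[of mult z] by auto
        then show "z \<in> W (Suc k)" using prods by simp
      qed
      have "Sp 2 \<subseteq> W (Suc k)" unfolding Sp_def by (rule fd.span_minimal[OF P2 sW])
      show "W (Suc k) = UNIV"
      proof (rule set_eqI, simp)
        fix z
        obtain u s where "u \<in> U" "s \<in> Sp 2" "z = u + s" using W2 unfolding W_def by blast
        then show "z \<in> W (Suc k)" using UW \<open>Sp 2 \<subseteq> W (Suc k)\<close> fd.subspace_add[OF sW] by blast
      qed
    qed
    have allk: "W k = UNIV" if "k \<ge> 2" for k
      using that
    proof (induction k rule: dec_induct)
      case base then show ?case by (rule W2)
    next
      case (step k) then show ?case using \<open>\<And>k. k\<ge>1 \<Longrightarrow> W k = UNIV \<Longrightarrow> W (Suc k) = UNIV\<close> by auto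
    qed
    obtain n where n: "n \<ge> 1" "\<forall>x. product_of_degree mult n x \<longrightarrow> x = 0"
      using nil unfolding nilpotent_alg_def by auto
    have "Sp (n + 2) \<subseteq> Sp n" using Sp_mono n by auto
    also have "Sp n \<subseteq> fd.span {0}" unfolding Sp_def
    proof (rule fd.span_mono)
      show "{x. product_of_degree mult n x} \<subseteq> {0}" using n by auto
    qed
    also have "fd.span {0} = {0}" by simp
    finally have "Sp (n + 2) \<subseteq> {0}" .
    then have "W (n + 2) \<subseteq> U" unfolding W_def by auto
    then have allU: "x \<in> U" for x using allk[of "n+2"] by auto
    have "x = 0" for x :: 'v
    proof (rule Bnd, rule allI)
      fix y show "B x y = 0" using isoU allU[of x] allU[of y] unfolding totally_isotropic_def by blast
    qed
    then show False using ne by auto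
  qed
  obtain Wb where Wb: "Wb \<subseteq> W 2" "fd.independent Wb" "W 2 \<subseteq> fd.span Wb" "card Wb = fd.dim (W 2)"
    using fd.basis_exists by blast
  have fWb: "finite Wb" using Wb(2) fd.finiteI_independent by auto
  have spW: "fd.span (W 2) = W 2" using sW fd.span_eq_iff by blast
  have "fd.dim (W 2) \<noteq> fd.dimension"
  proof
    assume "fd.dim (W 2) = fd.dimension"
    then have "fd.span (W 2) = UNIV" using fd.dim_eq_full by blast
    then show False using spW W2ne by metis
  qed
  then have "fd.dim (W 2) < fd.dim (UNIV :: 'v set)"
    using fd.dim_subset_UNIV[of "W 2"] by (simp add: fd.dimension_def)
  then obtain x where x: "x \<noteq> 0" "\<forall>b\<in>Wb. B x b = 0"
    using fd.perp_exists[where f=B, OF Badd Bsc fWb fd.subspace_UNIV] Wb(4) by auto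
  have xspan: "B x w = 0" if "w \<in> fd.span Wb" for w
    using that
  proof (induction rule: fd.span_induct_alt)
    case base then show ?case by (rule B02)
  next
    case (step c y z) then show ?case using x by (simp add: Badd2 Bsc2)
  qed
  have xW: "B x w = 0" if "w \<in> W 2" for w using xspan that Wb(3) by auto
  obtain a b where ab: "a \<in> U" "b \<in> V" "x = a + b" using dec by blast
  have "b = 0"
  proof (rule Bnd, rule allI)
    fix y
    obtain u' v' where uv: "u' \<in> U" "v' \<in> V" "y = u' + v'" using dec by blast
    have "B x u' = 0" using xW UW uv by auto
    moreover have "B a u' = 0" using isoU ab uv unfolding totally_isotropic_def by auto
    ultimately have "B b u' = 0" using ab Badd by auto
    moreover have "B b v' = 0" using isoV ab uv unfolding totally_isotropic_def by auto
    ultimately show "B b y = 0" using uv Badd2 by auto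
  qed
  then have xU: "x \<in> U" using ab by simp
  have xAnn: "x \<in> Ann mult" unfolding Ann_def
  proof (safe)
    fix y
    show "mult x y = 0"
    proof (rule Bnd, rule allI)
      fix z
      have "mult y z \<in> W 2" using SpW prod2 by auto
      then show "B (mult x y) z = 0" using Binv xW by auto
    qed
  qed
  show ?thesis using x xU xAnn by auto
qed

theorem mainTheorem12:
  fixes scale :: "'k::field_char_0 \<Rightarrow> 'v::ab_group_add \<Rightarrow> 'v"
    and mult :: "'v \<Rightarrow> 'v \<Rightarrow> 'v"
    and B :: "'v \<Rightarrow> 'v \<Rightarrow> 'k"
    and U V :: "'v set"
  assumes "jordan_manin scale mult B U V"
    and "(UNIV :: 'v set) \<noteq> {0}"
    and "nilpotent_alg mult"
  shows "U \<inter> Ann mult \<noteq> {0} \<and> V \<inter> Ann mult \<noteq> {0}"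
proof
  show "U \<inter> Ann mult \<noteq> {0}" using one_side assms by blast
  have "jordan_manin scale mult B V U"
  proof -
    have "\<exists>u\<in>V. \<exists>v\<in>U. x = u + v" if h: "\<forall>x. \<exists>u\<in>U. \<exists>v\<in>V. x = u + v" for x
    proof -
      obtain u v where "u \<in> U" "v \<in> V" "x = u + v" using h by blast
      then show ?thesis by (intro bexI[of _ v] bexI[of _ u]) (auto simp: add.commute)
    qed
    then show ?thesis
      using assms(1) unfolding jordan_manin_def direct_sum_decomp_def by (auto simp: Int_commute)
  qed
  then show "V \<inter> Ann mult \<noteq> {0}" using one_side assms(2,3) by blast
qed

end
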